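(* (1) Let $G=(V,E)$ be a graph with non-negative edge weights $w:E\to\mathbb{R}_{\ge0}$. The Steiner tree diversity of $G$ is the unique maximal diversity $\delta$ on $V$ (with respect to the pointwise order $\delta_1\preceq\delta_2$ iff $\delta_1(A)\le\delta_2(A)$ for all finite $A$) such that $\delta(\{u,v\})\le w(\{u,v\})$ for all $\{u,v\}\in E$. (2) Let $H=(V,E)$ be a hypergraph with non-negative weights $w:E\to\mathbb{R}_{\ge0}$. The hypergraph Steiner diversity of $H$ is the unique maximal diversity $\delta$ on $V$ (with respect to $\preceq$) such that $\delta(A)\le w(A)$ for all $A\in E$.
   Context: A diversity on a set $X$ is a function $\delta$ from finite subsets of $X$ to $\mathbb{R}$ with $\delta(A)\ge 0$, $\delta(A)=0$ whenever $|A|\le 1$ (values $0$ on larger sets are allowed), and $\delta(A\cup B)+\delta(B\cup C)\ge\delta(A\cup C)$ for all finite $A,B,C$ with $B\neq\emptyset$. The Steiner tree diversity of a weighted graph assigns to $A\subseteq V$ the minimum total weight of a connected subgraph of $G$ containing $A$. The hypergraph Steiner diversity assigns to $A\subseteq V$ the minimum of $\sum_{e\in E'}w(e)$ over all $E'\subseteq E$ such that the sub-hypergraph induced by $E'$ is connected and includes $A$. *)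

theory Defs
  imports Complex_Main
begin

definition is_diversity :: "'a set \<Rightarrow> ('a set \<Rightarrow> real) \<Rightarrow> bool" where
  "is_diversity X \<delta> \<longleftrightarrow>
     (\<forall>A. finite A \<and> A \<subseteq> X \<longrightarrow> \<delta> A \<ge> 0) \<and>
     (\<forall>A. finite A \<and> A \<subseteq> X \<and> card A \<le> 1 \<longrightarrow> \<delta> A = 0) \<and>
     (\<forall>A B C. finite A \<and> A \<subseteq> X \<and> finite B \<and> B \<subseteq> X \<and> finite C \<and> C \<subseteq> X
        \<and> B \<noteq> {} \<longrightarrow> \<delta> (A \<union> B) + \<delta> (B \<union> C) \<ge> \<delta> (A \<union> C))"

definition div_le :: "'a set \<Rightarrow> ('a set \<Rightarrow> real) \<Rightarrow> ('a set \<Rightarrow> real) \<Rightarrow> bool" where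
  "div_le X \<delta>1 \<delta>2 \<longleftrightarrow> (\<forall>A. finite A \<and> A \<subseteq> X \<longrightarrow> \<delta>1 A \<le> \<delta>2 A)"

definition adj :: "'a set set \<Rightarrow> ('a \<times> 'a) set" where
  "adj F = {(x, y). \<exists>e\<in>F. x \<in> e \<and> y \<in> e}"

definition connected_on :: "'a set \<Rightarrow> 'a set set \<Rightarrow> bool" where
  "connected_on W F \<longleftrightarrow> (\<forall>x\<in>W. \<forall>y\<in>W. (x, y) \<in> (adj F)\<^sup>*)"

definition is_graph :: "'a set \<Rightarrow> 'a set set \<Rightarrow> bool" where
  "is_graph V E \<longleftrightarrow> finite V \<and> (\<forall>e\<in>E. \<exists>u v. u \<in> V \<and> v \<in> V \<and> u \<noteq> v \<and> e = {u, v})"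

definition is_hypergraph :: "'a set \<Rightarrow> 'a set set \<Rightarrow> bool" where
  "is_hypergraph V E \<longleftrightarrow> finite V \<and> (\<forall>e\<in>E. e \<subseteq> V)"

definition steiner_tree_diversity ::
    "'a set \<Rightarrow> 'a set set \<Rightarrow> ('a set \<Rightarrow> real) \<Rightarrow> 'a set \<Rightarrow> real" where
  "steiner_tree_diversity V E w A =
     Min {sum w F | W F. A \<subseteq> W \<and> W \<subseteq> V \<and> F \<subseteq> E \<and> (\<forall>e\<in>F. e \<subseteq> W) \<and> connected_on W F}"

definition hypergraph_steiner_diversity ::
    "'a set \<Rightarrow> 'a set set \<Rightarrow> ('a set \<Rightarrow> real) \<Rightarrow> 'a set \<Rightarrow> real" where
  "hypergraph_steiner_diversity V E w A =
     (if card A \<le> 1 then 0 else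
      Min {sum w F | F. F \<subseteq> E \<and> connected_on (\<Union>F) F \<and> A \<subseteq> \<Union>F})"

end

theory Submission
  imports Defs
begin


lemma card1_iff: "finite A \<Longrightarrow> card A \<le> 1 \<longleftrightarrow> (\<forall>a1 \<in> A. \<forall>a2 \<in> A. a1 = a2)"
  using card_le_Suc0_iff_eq[of A] by simp

lemma div_nonneg: "is_diversity X \<delta> \<Longrightarrow> finite A \<Longrightarrow> A \<subseteq> X \<Longrightarrow> \<delta> A \<ge> 0"
  unfolding is_diversity_def by blast
lemma div_small: "is_diversity X \<delta> \<Longrightarrow> finite A \<Longrightarrow> A \<subseteq> X \<Longrightarrow> card A \<le> 1 \<Longrightarrow> \<delta> A = 0"
  unfolding is_diversity_def by blast
lemma div_tri: "is_diversity X \<delta> \<Longrightarrow> finite A \<Longrightarrow> A \<subseteq> X \<Longrightarrow> finite B \<Longrightarrow> B \<subseteq> X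
  \<Longrightarrow> finite C \<Longrightarrow> C \<subseteq> X \<Longrightarrow> B \<noteq> {} \<Longrightarrow> \<delta> (A \<union> C) \<le> \<delta> (A \<union> B) + \<delta> (B \<union> C)"
  unfolding is_diversity_def by blast

lemma div_mono_aux:
  assumes "is_diversity X \<delta>" "finite A" "A \<subseteq> X" "finite D" "D \<subseteq> X"
  shows "\<delta> A \<le> \<delta> (A \<union> D)"
  using assms(4,5)
proof (induction D rule: finite_induct)
  case empty then show ?case by simp
next
  case (insert b D)
  have "\<delta> ((A \<union> D) \<union> {}) \<le> \<delta> ((A \<union> D) \<union> {b}) + \<delta> ({b} \<union> {})"
    by (rule div_tri[OF assms(1)]) (use insert assms in auto)
  moreover have "\<delta> {b} = 0" by (rule div_small[OF assms(1)]) (use insert in auto)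
  moreover have "A \<union> insert b D = (A \<union> D) \<union> {b}" by auto
  ultimately show ?case using insert by simp
qed

lemma div_mono:
  assumes "is_diversity X \<delta>" "finite W" "W \<subseteq> X" "A \<subseteq> W"
  shows "\<delta> A \<le> \<delta> W"
proof -
  have "\<delta> A \<le> \<delta> (A \<union> (W - A))"
    by (rule div_mono_aux[OF assms(1)]) (use assms finite_subset in auto)
  moreover have "A \<union> (W - A) = W" using assms by auto
  ultimately show ?thesis by simp
qed

lemma conn_union:
  assumes "connected_on W1 F1" "connected_on W2 F2" "W1 \<inter> W2 \<noteq> {}"
  shows "connected_on (W1 \<union> W2) (F1 \<union> F2)"
proof -
  obtain b where b: "b \<in> W1" "b \<in> W2" using assms(3) by blast
  have "adj F1 \<subseteq> adj (F1 \<union> F2)" "adj F2 \<subseteq> adj (F1 \<union> F2)" unfolding adj_def by auto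
  hence m: "(adj F1)\<^sup>* \<subseteq> (adj (F1 \<union> F2))\<^sup>*" "(adj F2)\<^sup>* \<subseteq> (adj (F1 \<union> F2))\<^sup>*"
    by (simp_all add: rtrancl_mono)
  have 1: "\<forall>x\<in>W1 \<union> W2. (x, b) \<in> (adj (F1 \<union> F2))\<^sup>*"
    using assms(1,2) b m unfolding connected_on_def by blast
  have 2: "\<forall>x\<in>W1 \<union> W2. (b, x) \<in> (adj (F1 \<union> F2))\<^sup>*"
    using assms(1,2) b m unfolding connected_on_def by blast
  show ?thesis unfolding connected_on_def using 1 2 by (meson rtrancl_trans)
qed

lemma conn_empty: "connected_on W {} \<Longrightarrow> x \<in> W \<Longrightarrow> y \<in> W \<Longrightarrow> x = y"
  unfolding connected_on_def adj_def by auto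

lemma conn_mem:
  assumes "connected_on W F" "z \<in> W" "t \<in> W" "z \<noteq> t"
  shows "z \<in> \<Union>F"
proof -
  have "(z, t) \<in> (adj F)\<^sup>*" using assms unfolding connected_on_def by blast
  then show ?thesis
    by (rule converse_rtranclE) (use assms in \<open>auto simp: adj_def\<close>)
qed

lemma conn_in_union:
  assumes "connected_on W F" "F \<noteq> {}" "\<forall>e\<in>F. e \<subseteq> W" "\<forall>e\<in>F. e \<noteq> {}"
  shows "W = \<Union>F"
proof
  show "\<Union>F \<subseteq> W" using assms by auto
  show "W \<subseteq> \<Union>F"
  proof
    fix x assume x: "x \<in> W"
    obtain e y where "e \<in> F" "y \<in> e" using assms by blast
    then show "x \<in> \<Union>F" using conn_mem[OF assms(1) x, of y] assms by (cases "x = y") auto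
  qed
qed

lemma adj_remove_empty: "adj (F - {{}}) = adj F"
  unfolding adj_def by auto

lemma ext_edge:
  assumes "connected_on (\<Union>G) G" "S \<subseteq> G" "S \<noteq> {}" "S \<noteq> G" "{} \<notin> G"
  shows "\<exists>e\<in>G - S. e \<inter> \<Union>S \<noteq> {}"
proof (rule ccontr)
  assume H: "\<not> ?thesis"
  obtain e where e: "e \<in> G" "e \<notin> S" using assms by blast
  obtain x where x: "x \<in> e" using e assms(5) by (metis all_not_in_conv)
  obtain s where s: "s \<in> S" using assms(3) by blast
  obtain y where y: "y \<in> s" using s assms(2,5) by (metis all_not_in_conv subsetD)
  have "(y, x) \<in> (adj G)\<^sup>*" using assms(1,2) x y e s unfolding connected_on_def by blast
  then have "x \<in> \<Union>S"
  proof (induction rule: rtrancl_induct)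
    case base then show ?case using y s by blast
  next
    case (step b c)
    then obtain f where f: "f \<in> G" "b \<in> f" "c \<in> f" unfolding adj_def by blast
    with step H have "f \<in> S" by blast
    then show ?case using f by blast
  qed
  then show False using H e x by blast
qed

lemma div_connected_bound:
  assumes d: "is_diversity X \<delta>" and fin: "finite G" and sub: "\<Union>G \<subseteq> X"
    and fe: "\<forall>e\<in>G. finite e" and ne: "{} \<notin> G" "G \<noteq> {}" and c: "connected_on (\<Union>G) G"
  shows "\<delta> (\<Union>G) \<le> sum \<delta> G"
proof -
  have "\<forall>n. 1 \<le> n \<longrightarrow> n \<le> card G \<longrightarrow> (\<exists>S\<subseteq>G. card S = n \<and> \<delta> (\<Union>S) \<le> sum \<delta> S)"
  proof (rule allI)
    fix m show "1 \<le> m \<longrightarrow> m \<le> card G \<longrightarrow> (\<exists>S\<subseteq>G. card S = m \<and> \<delta> (\<Union>S) \<le> sum \<delta> S)"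
  proof (induction m)
    case 0 show ?case by simp
  next
    case (Suc n) have IH: "1 \<le> n \<longrightarrow> n \<le> card G \<longrightarrow> (\<exists>S\<subseteq>G. card S = n \<and> \<delta> (\<Union>S) \<le> sum \<delta> S)" by (rule Suc)
    show "1 \<le> Suc n \<longrightarrow> Suc n \<le> card G \<longrightarrow> (\<exists>S\<subseteq>G. card S = Suc n \<and> \<delta> (\<Union>S) \<le> sum \<delta> S)"
    proof (intro impI)
      assume le: "Suc n \<le> card G"
      show "\<exists>S\<subseteq>G. card S = Suc n \<and> \<delta> (\<Union>S) \<le> sum \<delta> S"
      proof (cases "n = 0")
        case True
        obtain e where "e \<in> G" using ne by blast
        then show ?thesis using True by (intro exI[of _ "{e}"]) auto
      next
        case False
        then obtain S where S: "S \<subseteq> G" "card S = n" "\<delta> (\<Union>S) \<le> sum \<delta> S" using IH le by auto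
        have Sne: "S \<noteq> {}" using S False by auto
        have "S \<noteq> G" using S le by auto
        then obtain e where e: "e \<in> G - S" "e \<inter> \<Union>S \<noteq> {}" using ext_edge[OF c S(1) Sne _ ne(1)] by blast
        have finS: "finite S" using S fin finite_subset by blast
        have fU: "finite (\<Union>S)" using finS S fe by blast
        have "\<delta> (\<Union>S \<union> e) \<le> \<delta> (\<Union>S \<union> (e \<inter> \<Union>S)) + \<delta> ((e \<inter> \<Union>S) \<union> e)"
          by (rule div_tri[OF d]) (use fU e fe sub S in auto)
        moreover have "\<Union>S \<union> (e \<inter> \<Union>S) = \<Union>S" "(e \<inter> \<Union>S) \<union> e = e" by auto
        ultimately have "\<delta> (\<Union>(insert e S)) \<le> \<delta> (\<Union>S) + \<delta> e" by (simp add: Un_commute)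
        also have "\<dots> \<le> sum \<delta> (insert e S)" using S e finS by simp
        finally show ?thesis using S e finS by (intro exI[of _ "insert e S"]) auto
      qed
    qed
  qed
  qed
  then obtain S where S: "S \<subseteq> G" "card S = card G" "\<delta> (\<Union>S) \<le> sum \<delta> S"
    using ne fin by (meson card_0_eq le_refl less_one not_le)
  then have "S = G" using fin by (simp add: card_subset_eq)
  then show ?thesis using S by simp
qed



context
  fixes V :: "'a set" and E and w :: "'a set \<Rightarrow> real"
  assumes G: "is_graph V E" and C: "connected_on V E" and W: "\<forall>e\<in>E. w e \<ge> 0"
begin

private lemma finV: "finite V" using G unfolding is_graph_def by blast
private lemma EPow: "E \<subseteq> Pow V" using G unfolding is_graph_def by fastforce
private lemma finE: "finite E" by (rule finite_subset[OF EPow]) (simp add: finV)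
private lemma edge: "e \<in> E \<Longrightarrow> \<exists>u v. e = {u, v}" using G unfolding is_graph_def by blast

private definition GS where
  "GS A = {sum w F | W F. A \<subseteq> W \<and> W \<subseteq> V \<and> F \<subseteq> E \<and> (\<forall>e\<in>F. e \<subseteq> W) \<and> connected_on W F}"

private lemma D_eq: "steiner_tree_diversity V E w A = Min (GS A)"
  unfolding steiner_tree_diversity_def GS_def by simp

private lemma GS_fin: "finite (GS A)"
proof -
  have "GS A \<subseteq> sum w ` Pow E" unfolding GS_def by auto
  then show ?thesis using finE finite_subset by blast
qed

private lemma GS_mem: "A \<subseteq> W \<Longrightarrow> W \<subseteq> V \<Longrightarrow> F \<subseteq> E \<Longrightarrow> \<forall>e\<in>F. e \<subseteq> W \<Longrightarrow> connected_on W F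
   \<Longrightarrow> sum w F \<in> GS A"
  unfolding GS_def by blast

private lemma GS_ne: "A \<subseteq> V \<Longrightarrow> GS A \<noteq> {}"
proof -
  assume "A \<subseteq> V"
  then have "sum w E \<in> GS A" using GS_mem[of A V E] C EPow by blast
  then show ?thesis by blast
qed

private lemma D_le:
  "A \<subseteq> W \<Longrightarrow> W \<subseteq> V \<Longrightarrow> F \<subseteq> E \<Longrightarrow> \<forall>e\<in>F. e \<subseteq> W \<Longrightarrow> connected_on W F
   \<Longrightarrow> steiner_tree_diversity V E w A \<le> sum w F"
  unfolding D_eq by (rule Min_le[OF GS_fin], rule GS_mem)

private lemma D_wit: "A \<subseteq> V \<Longrightarrow> \<exists>W F. A \<subseteq> W \<and> W \<subseteq> V \<and> F \<subseteq> E \<and> (\<forall>e\<in>F. e \<subseteq> W)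
   \<and> connected_on W F \<and> steiner_tree_diversity V E w A = sum w F"
proof -
  assume "A \<subseteq> V"
  then have "Min (GS A) \<in> GS A" using Min_in[OF GS_fin GS_ne] by blast
  then show ?thesis unfolding D_eq GS_def by blast
qed

private lemma sum_nn: "F \<subseteq> E \<Longrightarrow> sum w F \<ge> 0"
  using W by (meson subsetD sum_nonneg)

lemma g_div: "is_diversity V (steiner_tree_diversity V E w)"
  unfolding is_diversity_def
proof (intro conjI allI impI)
  fix A assume "finite A \<and> A \<subseteq> V"
  then have "A \<subseteq> V" by simp
  from D_wit[OF this] obtain W F where "F \<subseteq> E" "steiner_tree_diversity V E w A = sum w F" by blast
  then show "0 \<le> steiner_tree_diversity V E w A" using sum_nn by simp
next
  fix A assume A: "finite A \<and> A \<subseteq> V \<and> card A \<le> 1"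
  have a0: "adj {} = {}" unfolding adj_def by simp
  have "\<forall>a1\<in>A. \<forall>a2\<in>A. a1 = a2" using A card1_iff by blast
  then have "connected_on A {}" unfolding connected_on_def a0 by simp
  then have "steiner_tree_diversity V E w A \<le> 0" using D_le[of A A "{}"] A by simp
  moreover have "A \<subseteq> V" using A by simp
  moreover from D_wit[OF this] obtain W F where "F \<subseteq> E" "steiner_tree_diversity V E w A = sum w F" by blast
  moreover have "0 \<le> steiner_tree_diversity V E w A" using calculation(3,4) sum_nn by simp
  ultimately show "steiner_tree_diversity V E w A = 0" by simp
next
  fix A B Ca assume H: "finite A \<and> A \<subseteq> V \<and> finite B \<and> B \<subseteq> V \<and> finite Ca \<and> Ca \<subseteq> V \<and> B \<noteq> {}"
  obtain W1 F1 where 1: "A \<union> B \<subseteq> W1" "W1 \<subseteq> V" "F1 \<subseteq> E" "\<forall>e\<in>F1. e \<subseteq> W1"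
     "connected_on W1 F1" "steiner_tree_diversity V E w (A \<union> B) = sum w F1"
    using D_wit[of "A \<union> B"] H by (meson Un_least)
  obtain W2 F2 where 2: "B \<union> Ca \<subseteq> W2" "W2 \<subseteq> V" "F2 \<subseteq> E" "\<forall>e\<in>F2. e \<subseteq> W2"
     "connected_on W2 F2" "steiner_tree_diversity V E w (B \<union> Ca) = sum w F2"
    using D_wit[of "B \<union> Ca"] H by (meson Un_least)
  have c: "connected_on (W1 \<union> W2) (F1 \<union> F2)" using conn_union[OF 1(5) 2(5)] 1 2 H by blast
  have "steiner_tree_diversity V E w (A \<union> Ca) \<le> sum w (F1 \<union> F2)"
    by (rule D_le[OF _ _ _ _ c]) (use 1 2 in auto)
  also have "\<dots> \<le> sum w F1 + sum w F2"
  proof -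
    have f: "finite F1" "finite F2" using finite_subset[OF 1(3) finE] finite_subset[OF 2(3) finE] by auto
    have "F1 \<inter> F2 \<subseteq> E" using 1(3) by blast
    then have "sum w (F1 \<inter> F2) \<ge> 0" by (rule sum_nn)
    then show ?thesis using sum_Un[OF f, of w] by simp
  qed
  finally show "steiner_tree_diversity V E w (A \<union> Ca)
     \<le> steiner_tree_diversity V E w (A \<union> B) + steiner_tree_diversity V E w (B \<union> Ca)"
    using 1 2 by simp
qed

lemma g_edge: "{u, v} \<in> E \<Longrightarrow> steiner_tree_diversity V E w {u, v} \<le> w {u, v}"
proof -
  assume e: "{u, v} \<in> E"
  have "connected_on {u, v} {{u, v}}" unfolding connected_on_def adj_def by auto
  then show ?thesis using D_le[of "{u,v}" "{u,v}" "{{u,v}}"] e EPow by auto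
qed

lemma g_max:
  assumes d: "is_diversity V \<delta>" and b: "\<forall>u v. {u, v} \<in> E \<longrightarrow> \<delta> {u, v} \<le> w {u, v}"
  shows "div_le V \<delta> (steiner_tree_diversity V E w)"
  unfolding div_le_def
proof (intro allI impI)
  fix A assume A: "finite A \<and> A \<subseteq> V"
  show "\<delta> A \<le> steiner_tree_diversity V E w A"
    unfolding D_eq
  proof (rule Min.boundedI[OF GS_fin GS_ne])
    show "A \<subseteq> V" using A by simp
  next
    fix x assume "x \<in> GS A"
    then obtain Wa F where H: "x = sum w F" "A \<subseteq> Wa" "Wa \<subseteq> V" "F \<subseteq> E" "\<forall>e\<in>F. e \<subseteq> Wa"
      "connected_on Wa F" unfolding GS_def by auto
    have fW: "finite Wa" using finite_subset[OF H(3) finV] .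
    show "\<delta> A \<le> x"
    proof (cases "F = {}")
      case True
      have "\<forall>a1\<in>A. \<forall>a2\<in>A. a1 = a2"
      proof (intro ballI)
        fix a1 a2 assume "a1 \<in> A" "a2 \<in> A"
        then have "a1 \<in> Wa" "a2 \<in> Wa" using H(2) by auto
        then show "a1 = a2" using conn_empty[of Wa a1 a2] H(6) True by simp
      qed
      then have "card A \<le> 1" using A card1_iff by blast
      then show ?thesis using div_small[OF d] A H True by simp
    next
      case False
      have ne: "\<forall>e\<in>F. e \<noteq> {}"
      proof
        fix e assume "e \<in> F"
        then have "e \<in> E" using H(4) by blast
        from edge[OF this] show "e \<noteq> {}" by auto
      qed
      have WU: "Wa = \<Union>F" using conn_in_union[OF H(6) False H(5) ne] .
      have fF: "finite F" using finite_subset[OF H(4) finE] .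
      have "\<delta> A \<le> \<delta> Wa" by (rule div_mono[OF d fW]) (use H in auto)
      also have "\<dots> \<le> sum \<delta> F"
        unfolding WU
      proof (rule div_connected_bound[OF d fF])
        show "\<Union>F \<subseteq> V" using H WU by blast
        show "\<forall>e\<in>F. finite e" using H(5) fW by (meson finite_subset)
        show "{} \<notin> F" using ne by blast
        show "F \<noteq> {}" by (rule False)
        show "connected_on (\<Union>F) F" using H(6) WU by simp
      qed
      also have "\<dots> \<le> sum w F"
      proof (rule sum_mono)
        fix e assume "e \<in> F"
        then have eE: "e \<in> E" using H(4) by blast
        from edge[OF eE] obtain u v where "e = {u, v}" by blast
        with eE have "e = {u, v}" "{u,v} \<in> E" by auto
        then show "\<delta> e \<le> w e" using b by simp
      qed
      finally show ?thesis using H by simp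
    qed
  qed
qed

end


context
  fixes V :: "'a set" and E and w :: "'a set \<Rightarrow> real"
  assumes G: "is_hypergraph V E" and C: "connected_on V E" and W: "\<forall>e\<in>E. w e \<ge> 0"
begin

private lemma hfinV: "finite V" using G unfolding is_hypergraph_def by simp
private lemma hEPow: "E \<subseteq> Pow V" using G unfolding is_hypergraph_def by auto
private lemma hfinE: "finite E" by (rule finite_subset[OF hEPow]) (simp add: hfinV)

private definition HS where
  "HS A = {sum w F | F. F \<subseteq> E \<and> connected_on (\<Union>F) F \<and> A \<subseteq> \<Union>F}"

private lemma hD_eq: "\<not> card A \<le> 1 \<Longrightarrow> hypergraph_steiner_diversity V E w A = Min (HS A)"
  unfolding hypergraph_steiner_diversity_def HS_def by simp

private lemma hD_small: "card A \<le> 1 \<Longrightarrow> hypergraph_steiner_diversity V E w A = 0"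
  unfolding hypergraph_steiner_diversity_def by simp

private lemma hHS_fin: "finite (HS A)"
proof -
  have "HS A \<subseteq> sum w ` Pow E" unfolding HS_def by auto
  then show ?thesis using hfinE finite_subset by blast
qed

private lemma hHS_mem: "F \<subseteq> E \<Longrightarrow> connected_on (\<Union>F) F \<Longrightarrow> A \<subseteq> \<Union>F \<Longrightarrow> sum w F \<in> HS A"
  unfolding HS_def by blast

private lemma hsum_nn: "F \<subseteq> E \<Longrightarrow> sum w F \<ge> 0"
  using W by (meson subsetD sum_nonneg)

private lemma hHS_ne:
  assumes A: "finite A" "A \<subseteq> V" "\<not> card A \<le> 1"
  shows "HS A \<noteq> {}"
proof -
  obtain x y where xy: "x \<in> A" "y \<in> A" "x \<noteq> y" using A card1_iff by blast
  have "V \<subseteq> \<Union>E"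
  proof
    fix z assume z: "z \<in> V"
    show "z \<in> \<Union>E"
    proof (cases "z = x")
      case True
      then show ?thesis using conn_mem[OF C z, of y] xy A by blast
    next
      case False
      then show ?thesis using conn_mem[OF C z, of x] xy A by blast
    qed
  qed
  moreover have "\<Union>E \<subseteq> V" using hEPow by blast
  ultimately have UE: "\<Union>E = V" by blast
  have "sum w E \<in> HS A" by (rule hHS_mem) (use UE C A in auto)
  then show ?thesis by blast
qed

private lemma hD_le:
  assumes "F \<subseteq> E" "connected_on (\<Union>F) F" "A \<subseteq> \<Union>F"
  shows "hypergraph_steiner_diversity V E w A \<le> sum w F"
proof (cases "card A \<le> 1")
  case True then show ?thesis using hD_small hsum_nn[OF assms(1)] by simp
next
  case False
  show ?thesis unfolding hD_eq[OF False] by (rule Min_le[OF hHS_fin, OF hHS_mem[OF assms]])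
qed

private lemma hD_wit:
  assumes "finite A" "A \<subseteq> V"
  shows "\<exists>F. F \<subseteq> E \<and> connected_on (\<Union>F) F \<and> (card A \<le> 1 \<or> A \<subseteq> \<Union>F)
     \<and> hypergraph_steiner_diversity V E w A = sum w F"
proof (cases "card A \<le> 1")
  case True
  have "connected_on (\<Union>{}) {}" unfolding connected_on_def by simp
  then show ?thesis using True hD_small by (intro exI[of _ "{}"]) simp
next
  case False
  have "Min (HS A) \<in> HS A" using Min_in[OF hHS_fin hHS_ne[OF assms False]] .
  then obtain F where "F \<subseteq> E" "connected_on (\<Union>F) F" "A \<subseteq> \<Union>F" "Min (HS A) = sum w F"
    unfolding HS_def by auto
  then show ?thesis using hD_eq[OF False] by (intro exI[of _ F]) simp
qed

private lemma hD_nn: "finite A \<Longrightarrow> A \<subseteq> V \<Longrightarrow> hypergraph_steiner_diversity V E w A \<ge> 0"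
proof -
  assume "finite A" "A \<subseteq> V"
  from hD_wit[OF this] obtain F where "F \<subseteq> E" "hypergraph_steiner_diversity V E w A = sum w F" by blast
  then show ?thesis using hsum_nn by simp
qed

lemma h_div: "is_diversity V (hypergraph_steiner_diversity V E w)"
  unfolding is_diversity_def
proof (intro conjI allI impI)
  fix A assume "finite A \<and> A \<subseteq> V"
  then show "0 \<le> hypergraph_steiner_diversity V E w A" using hD_nn by simp
next
  fix A assume "finite A \<and> A \<subseteq> V \<and> card A \<le> 1"
  then show "hypergraph_steiner_diversity V E w A = 0" using hD_small by simp
next
  fix A B Ca assume H: "finite A \<and> A \<subseteq> V \<and> finite B \<and> B \<subseteq> V \<and> finite Ca \<and> Ca \<subseteq> V \<and> B \<noteq> {}"
  let ?D = "hypergraph_steiner_diversity V E w"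
  have fAB: "finite (A \<union> B)" "A \<union> B \<subseteq> V" and fBC: "finite (B \<union> Ca)" "B \<union> Ca \<subseteq> V"
    and fAC: "finite (A \<union> Ca)" using H by auto
  obtain F1 where 1: "F1 \<subseteq> E" "connected_on (\<Union>F1) F1" "card (A \<union> B) \<le> 1 \<or> A \<union> B \<subseteq> \<Union>F1"
    "?D (A \<union> B) = sum w F1" using hD_wit[OF fAB] by blast
  obtain F2 where 2: "F2 \<subseteq> E" "connected_on (\<Union>F2) F2" "card (B \<union> Ca) \<le> 1 \<or> B \<union> Ca \<subseteq> \<Union>F2"
    "?D (B \<union> Ca) = sum w F2" using hD_wit[OF fBC] by blast
  have n1: "?D (A \<union> B) \<ge> 0" using hD_nn[OF fAB] .
  have n2: "?D (B \<union> Ca) \<ge> 0" using hD_nn[OF fBC] .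
  obtain b where b: "b \<in> B" using H by blast
  show "?D (A \<union> Ca) \<le> ?D (A \<union> B) + ?D (B \<union> Ca)"
  proof (cases "card (A \<union> Ca) \<le> 1")
    case True then show ?thesis using hD_small n1 n2 by simp
  next
    case big: False
    show ?thesis
    proof (cases "card (A \<union> B) \<le> 1")
      case True
      then have "\<forall>a1\<in>A \<union> B. \<forall>a2\<in>A \<union> B. a1 = a2" using card1_iff[OF fAB(1)] by blast
      then have "A \<subseteq> B"
      proof -
        assume q: "\<forall>a1\<in>A \<union> B. \<forall>a2\<in>A \<union> B. a1 = a2"
        show "A \<subseteq> B"
        proof
          fix a assume "a \<in> A"
          then have "a = b" using q b by simp
          then show "a \<in> B" using b by simp
        qed
      qed
      then have sub: "A \<union> Ca \<subseteq> B \<union> Ca" by blast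
      have "\<not> card (B \<union> Ca) \<le> 1" using card_mono[OF fBC(1) sub] big by linarith
      then have "A \<union> Ca \<subseteq> \<Union>F2" using 2(3) sub by blast
      then have "?D (A \<union> Ca) \<le> sum w F2" using hD_le[OF 2(1,2)] by blast
      then show ?thesis using 2(4) n1 by linarith
    next
      case c1: False
      show ?thesis
      proof (cases "card (B \<union> Ca) \<le> 1")
        case True
        then have "\<forall>a1\<in>B \<union> Ca. \<forall>a2\<in>B \<union> Ca. a1 = a2" using card1_iff[OF fBC(1)] by blast
        then have "Ca \<subseteq> B"
        proof -
          assume q: "\<forall>a1\<in>B \<union> Ca. \<forall>a2\<in>B \<union> Ca. a1 = a2"
          show "Ca \<subseteq> B"
          proof
            fix a assume "a \<in> Ca"
            then have "a = b" using q b by simp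
            then show "a \<in> B" using b by simp
          qed
        qed
        then have sub: "A \<union> Ca \<subseteq> A \<union> B" by blast
        then have "A \<union> Ca \<subseteq> \<Union>F1" using 1(3) c1 by blast
        then have "?D (A \<union> Ca) \<le> sum w F1" using hD_le[OF 1(1,2)] by blast
        then show ?thesis using 1(4) n2 by linarith
      next
        case c2: False
        have s1: "A \<union> B \<subseteq> \<Union>F1" using 1(3) c1 by blast
        have s2: "B \<union> Ca \<subseteq> \<Union>F2" using 2(3) c2 by blast
        have "\<Union>F1 \<inter> \<Union>F2 \<noteq> {}" using s1 s2 b by blast
        from conn_union[OF 1(2) 2(2) this]
        have c: "connected_on (\<Union>(F1 \<union> F2)) (F1 \<union> F2)" by simp
        have "?D (A \<union> Ca) \<le> sum w (F1 \<union> F2)"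
          by (rule hD_le[OF _ c]) (use 1(1) 2(1) s1 s2 in auto)
        also have "\<dots> \<le> sum w F1 + sum w F2"
        proof -
          have f: "finite F1" "finite F2" using finite_subset[OF 1(1) hfinE] finite_subset[OF 2(1) hfinE] by auto
          have "F1 \<inter> F2 \<subseteq> E" using 1(1) by blast
          then have "sum w (F1 \<inter> F2) \<ge> 0" by (rule hsum_nn)
          then show ?thesis using sum_Un[OF f, of w] by simp
        qed
        finally show ?thesis using 1(4) 2(4) by simp
      qed
    qed
  qed
qed

lemma h_edge: "A \<in> E \<Longrightarrow> hypergraph_steiner_diversity V E w A \<le> w A"
proof -
  assume e: "A \<in> E"
  have "connected_on (\<Union>{A}) {A}" unfolding connected_on_def adj_def by auto
  then show ?thesis using hD_le[of "{A}" A] e by simp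
qed

lemma h_max:
  assumes d: "is_diversity V \<delta>" and bd: "\<forall>A\<in>E. \<delta> A \<le> w A"
  shows "div_le V \<delta> (hypergraph_steiner_diversity V E w)"
  unfolding div_le_def
proof (intro allI impI)
  fix A assume A: "finite A \<and> A \<subseteq> V"
  show "\<delta> A \<le> hypergraph_steiner_diversity V E w A"
  proof (cases "card A \<le> 1")
    case True
    then show ?thesis using div_small[OF d] hD_small A by simp
  next
    case False
    show ?thesis
      unfolding hD_eq[OF False]
    proof (rule Min.boundedI[OF hHS_fin])
      show "HS A \<noteq> {}" using hHS_ne A False by simp
    next
      fix x assume "x \<in> HS A"
      then obtain F where H: "x = sum w F" "F \<subseteq> E" "connected_on (\<Union>F) F" "A \<subseteq> \<Union>F"
        unfolding HS_def by auto
      define F' where "F' = F - {{}}"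
      have U: "\<Union>F' = \<Union>F" unfolding F'_def by auto
      have c': "connected_on (\<Union>F') F'" using H(3) U adj_remove_empty[of F]
        unfolding F'_def connected_on_def by simp
      have fF: "finite F" using finite_subset[OF H(2) hfinE] .
      have fF': "finite F'" using fF unfolding F'_def by simp
      have UV: "\<Union>F \<subseteq> V" using H(2) hEPow by blast
      have fU: "finite (\<Union>F)" using finite_subset[OF UV hfinV] .
      have Ane: "A \<noteq> {}" using False by (metis card.empty zero_le_one)
      have "F' \<noteq> {}" using Ane H(4) U by (metis Union_empty subset_empty)
      have "\<delta> A \<le> \<delta> (\<Union>F)" by (rule div_mono[OF d fU UV H(4)])
      also have "\<dots> \<le> sum \<delta> F'"
        unfolding U[symmetric]
      proof (rule div_connected_bound[OF d fF'])
        show "\<Union>F' \<subseteq> V" using UV U by simp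
        show "\<forall>e\<in>F'. finite e" using fU U by (metis Union_upper finite_subset)
        show "{} \<notin> F'" unfolding F'_def by simp
        show "F' \<noteq> {}" by fact
        show "connected_on (\<Union>F') F'" by (rule c')
      qed
      also have "\<dots> \<le> sum w F'"
      proof (rule sum_mono)
        fix e assume "e \<in> F'"
        then have "e \<in> E" using H(2) unfolding F'_def by blast
        then show "\<delta> e \<le> w e" using bd by simp
      qed
      also have "\<dots> \<le> sum w F"
      proof (rule sum_mono2[OF fF])
        show "F' \<subseteq> F" unfolding F'_def by blast
        show "\<And>b. b \<in> F - F' \<Longrightarrow> 0 \<le> w b" using H(2) W by blast
      qed
      finally show "\<delta> A \<le> x" using H(1) by simp
    qed
  qed
qed

end

lemma graph_main:
  assumes "is_graph V E \<and> connected_on V E \<and> (\<forall>e\<in>E. w e \<ge> 0)"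
  shows "(let P = (\<lambda>\<delta>. is_diversity V \<delta> \<and> (\<forall>u v. {u, v} \<in> E \<longrightarrow> \<delta> {u, v} \<le> w {u, v}));
            D = steiner_tree_diversity V E w
        in P D \<and> (\<forall>\<delta>. P \<delta> \<longrightarrow> div_le V \<delta> D)
           \<and> (\<forall>\<delta>. P \<delta> \<and> (\<forall>\<delta>'. P \<delta>' \<and> div_le V \<delta> \<delta>' \<longrightarrow> div_le V \<delta>' \<delta>)
                  \<longrightarrow> div_le V \<delta> D \<and> div_le V D \<delta>))"
proof -
  have a: "is_graph V E" "connected_on V E" "\<forall>e\<in>E. w e \<ge> 0" using assms by auto
  note gd = g_div[OF a] and ge = g_edge[OF a] and gm = g_max[OF a]
  show ?thesis unfolding Let_def
  proof (intro conjI allI impI)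
    show "is_diversity V (steiner_tree_diversity V E w)" by (rule gd)
    show "\<And>u v. {u, v} \<in> E \<Longrightarrow> steiner_tree_diversity V E w {u, v} \<le> w {u, v}" by (rule ge)
  next
    fix \<delta> assume "is_diversity V \<delta> \<and> (\<forall>u v. {u, v} \<in> E \<longrightarrow> \<delta> {u, v} \<le> w {u, v})"
    then show "div_le V \<delta> (steiner_tree_diversity V E w)" using gm by blast
  next
    fix \<delta> assume h: "(is_diversity V \<delta> \<and> (\<forall>u v. {u, v} \<in> E \<longrightarrow> \<delta> {u, v} \<le> w {u, v})) \<and>
          (\<forall>\<delta>'. (is_diversity V \<delta>' \<and> (\<forall>u v. {u, v} \<in> E \<longrightarrow> \<delta>' {u, v} \<le> w {u, v})) \<and> div_le V \<delta> \<delta>' \<longrightarrow> div_le V \<delta>' \<delta>)"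
    then show "div_le V \<delta> (steiner_tree_diversity V E w)" using gm by blast
    then show "div_le V (steiner_tree_diversity V E w) \<delta>" using h gd ge by blast
  qed
qed

lemma hyper_main:
  assumes "is_hypergraph V E \<and> connected_on V E \<and> (\<forall>e\<in>E. w e \<ge> 0)"
  shows "(let P = (\<lambda>\<delta>. is_diversity V \<delta> \<and> (\<forall>A\<in>E. \<delta> A \<le> w A));
            D = hypergraph_steiner_diversity V E w
        in P D \<and> (\<forall>\<delta>. P \<delta> \<longrightarrow> div_le V \<delta> D)
           \<and> (\<forall>\<delta>. P \<delta> \<and> (\<forall>\<delta>'. P \<delta>' \<and> div_le V \<delta> \<delta>' \<longrightarrow> div_le V \<delta>' \<delta>)
                  \<longrightarrow> div_le V \<delta> D \<and> div_le V D \<delta>))"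
proof -
  have a: "is_hypergraph V E" "connected_on V E" "\<forall>e\<in>E. w e \<ge> 0" using assms by auto
  note gd = h_div[OF a] and ge = h_edge[OF a] and gm = h_max[OF a]
  show ?thesis unfolding Let_def
  proof (intro conjI allI impI ballI)
    show "is_diversity V (hypergraph_steiner_diversity V E w)" by (rule gd)
    show "\<And>A. A \<in> E \<Longrightarrow> hypergraph_steiner_diversity V E w A \<le> w A" by (rule ge)
  next
    fix \<delta> assume "is_diversity V \<delta> \<and> (\<forall>A\<in>E. \<delta> A \<le> w A)"
    then show "div_le V \<delta> (hypergraph_steiner_diversity V E w)" using gm by blast
  next
    fix \<delta> assume h: "(is_diversity V \<delta> \<and> (\<forall>A\<in>E. \<delta> A \<le> w A)) \<and>
          (\<forall>\<delta>'. (is_diversity V \<delta>' \<and> (\<forall>A\<in>E. \<delta>' A \<le> w A)) \<and> div_le V \<delta> \<delta>' \<longrightarrow> div_le V \<delta>' \<delta>)"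
    then show "div_le V \<delta> (hypergraph_steiner_diversity V E w)" using gm by blast
    then show "div_le V (hypergraph_steiner_diversity V E w) \<delta>" using h gd ge by blast
  qed
qed

theorem theorem3:
  shows
   "(\<forall>(V :: 'a set) E (w :: 'a set \<Rightarrow> real).
       is_graph V E \<and> connected_on V E \<and> (\<forall>e\<in>E. w e \<ge> 0) \<longrightarrow>
       (let P = (\<lambda>\<delta>. is_diversity V \<delta> \<and> (\<forall>u v. {u, v} \<in> E \<longrightarrow> \<delta> {u, v} \<le> w {u, v}));
            D = steiner_tree_diversity V E w
        in P D \<and> (\<forall>\<delta>. P \<delta> \<longrightarrow> div_le V \<delta> D)
           \<and> (\<forall>\<delta>. P \<delta> \<and> (\<forall>\<delta>'. P \<delta>' \<and> div_le V \<delta> \<delta>' \<longrightarrow> div_le V \<delta>' \<delta>)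
                  \<longrightarrow> div_le V \<delta> D \<and> div_le V D \<delta>)))
  \<and> (\<forall>(V :: 'a set) E (w :: 'a set \<Rightarrow> real).
       is_hypergraph V E \<and> connected_on V E \<and> (\<forall>e\<in>E. w e \<ge> 0) \<longrightarrow>
       (let P = (\<lambda>\<delta>. is_diversity V \<delta> \<and> (\<forall>A\<in>E. \<delta> A \<le> w A));
            D = hypergraph_steiner_diversity V E w
        in P D \<and> (\<forall>\<delta>. P \<delta> \<longrightarrow> div_le V \<delta> D)
           \<and> (\<forall>\<delta>. P \<delta> \<and> (\<forall>\<delta>'. P \<delta>' \<and> div_le V \<delta> \<delta>' \<longrightarrow> div_le V \<delta>' \<delta>)
                  \<longrightarrow> div_le V \<delta> D \<and> div_le V D \<delta>)))"
  apply (intro conjI allI impI)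
   apply (erule graph_main)
  apply (erule hyper_main)
  done

end
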